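(* Let $\phi=(1+\sqrt5)/2$, $R_0=(18-\sqrt5)/11$, $\alpha=R_0-1=2/(\phi+3)$, $\beta=\alpha/2=1/(\phi+3)$ and $\rho=\beta/\phi=(\phi-1)/(\phi+3)$. Let $P^A,P^B,S^A,S^B,Q$ be pairwise disjoint infinite sets of positive integers, each with a fixed enumeration, and for real $x\ge 0$ let $P^c_x$, $S^c_x$, $Q_x$ denote the first $\lfloor x\rfloor$ elements of $P^c$, $S^c$, $Q$ respectively. For $c\in\{A,B\}$, with $c'$ the other element of $\{A,B\}$, and integers $0<k\le t$, define $$F^c_{t,k}=P^c_{\alpha t+4}\cup\big(S^c_{\beta\min(t,\phi k)}\setminus S^c_{\beta(t-k)}\big)\cup\big(S^{c'}_{\beta k}\setminus S^{c'}_{\phi\beta(t-k)}\big)\cup\big(Q_{\rho\min(t,\phi k)}\setminus Q_{\phi\rho(t-k)}\big).$$ Then $\{F^c_{t,k}\}$ is an F-system, and for every positive integer $t$, $\left|\bigcup_{c\in\{A,B\}}\bigcup_{0<\kappa\le\tau\le t}F^c_{\tau,\kappa}\right|\le R_0 t+8$; in particular it is an $R_0$-competitive F-system.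
   Context: F-system: a family $\mathcal F=\{F^c_{t,k}\}$ of sets of positive integers, indexed by $c\in\{A,B\}$ and integers $0<k\le t$, such that (F1) $|F^c_{t,k}|\ge k$ for all $c,t,k$; and (F2) $F^A_{t,k}\cap F^B_{t',k'}=\emptyset$ for all $k\le t$, $k'\le t'$ with $k+k'\le\max(t,t')$. An F-system is $R$-competitive if there is a constant $\lambda$ (independent of $t$) such that for every positive integer $t$, $\left|\bigcup_{c\in\{A,B\}}\bigcup_{0<\kappa\le\tau\le t}F^c_{\tau,\kappa}\right|\le Rt+\lambda$. *)

theory Defs
  imports Complex_Main
begin

datatype color = A | B

fun other :: "color \<Rightarrow> color" where
  "other A = B" | "other B = A"

text \<open>F-system: a family F c t k (meaningful for integers 0 < k \<le> t).
  The cardinality condition (F1) is read with |X| = infinity for infinite X.\<close>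
definition F_system :: "(color \<Rightarrow> nat \<Rightarrow> nat \<Rightarrow> nat set) \<Rightarrow> bool" where
  "F_system F \<longleftrightarrow>
     (\<forall>c t k. 0 < k \<and> k \<le> t \<longrightarrow> (infinite (F c t k) \<or> k \<le> card (F c t k))) \<and>
     (\<forall>t k t' k'. 0 < k \<and> k \<le> t \<and> 0 < k' \<and> k' \<le> t' \<and> k + k' \<le> max t t'
        \<longrightarrow> F A t k \<inter> F B t' k' = {})"

definition F_union :: "(color \<Rightarrow> nat \<Rightarrow> nat \<Rightarrow> nat set) \<Rightarrow> nat \<Rightarrow> nat set" where
  "F_union F t = (\<Union>c. \<Union>\<tau>\<in>{1..t}. \<Union>\<kappa>\<in>{1..\<tau>}. F c \<tau> \<kappa>)"

definition competitive :: "real \<Rightarrow> (color \<Rightarrow> nat \<Rightarrow> nat \<Rightarrow> nat set) \<Rightarrow> bool" where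
  "competitive R F \<longleftrightarrow> F_system F \<and>
     (\<exists>lam::real. \<forall>t::nat. 0 < t \<longrightarrow>
        finite (F_union F t) \<and> real (card (F_union F t)) \<le> R * real t + lam)"

definition phi :: real where "phi = (1 + sqrt 5) / 2"
definition R0 :: real where "R0 = (18 - sqrt 5) / 11"
definition alpha :: real where "alpha = R0 - 1"
definition beta :: real where "beta = alpha / 2"
definition rho :: real where "rho = beta / phi"

definition firstn :: "(nat \<Rightarrow> nat) \<Rightarrow> real \<Rightarrow> nat set" where
  "firstn e x = e ` {..< nat \<lfloor>x\<rfloor>}"

definition enums_ok :: "(color \<Rightarrow> nat \<Rightarrow> nat) \<Rightarrow> (color \<Rightarrow> nat \<Rightarrow> nat) \<Rightarrow> (nat \<Rightarrow> nat) \<Rightarrow> bool" where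
  "enums_ok P S q \<longleftrightarrow>
     inj (P A) \<and> inj (P B) \<and> inj (S A) \<and> inj (S B) \<and> inj q \<and>
     (\<forall>n. 0 < P A n \<and> 0 < P B n \<and> 0 < S A n \<and> 0 < S B n \<and> 0 < q n) \<and>
     range (P A) \<inter> range (P B) = {} \<and> range (P A) \<inter> range (S A) = {} \<and>
     range (P A) \<inter> range (S B) = {} \<and> range (P A) \<inter> range q = {} \<and>
     range (P B) \<inter> range (S A) = {} \<and> range (P B) \<inter> range (S B) = {} \<and>
     range (P B) \<inter> range q = {} \<and> range (S A) \<inter> range (S B) = {} \<and>
     range (S A) \<inter> range q = {} \<and> range (S B) \<inter> range q = {}"

definition Fcons :: "(color \<Rightarrow> nat \<Rightarrow> nat) \<Rightarrow> (color \<Rightarrow> nat \<Rightarrow> nat) \<Rightarrow> (nat \<Rightarrow> nat)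
    \<Rightarrow> color \<Rightarrow> nat \<Rightarrow> nat \<Rightarrow> nat set" where
  "Fcons P S q c t k =
     firstn (P c) (alpha * real t + 4)
     \<union> (firstn (S c) (beta * min (real t) (phi * real k)) - firstn (S c) (beta * (real t - real k)))
     \<union> (firstn (S (other c)) (beta * real k) - firstn (S (other c)) (phi * beta * (real t - real k)))
     \<union> (firstn q (rho * min (real t) (phi * real k)) - firstn q (phi * rho * (real t - real k)))"

end

theory Submission imports Defs begin

lemma consts_facts:
  "phi^2 = phi + 1" "beta * (phi + 3) = 1" "alpha = 2 * beta" "rho * phi = beta"
  "phi > 1" "beta > 0" "rho > 0" "alpha > 0" "R0 = alpha + 1" "2 * alpha + rho = 1" "rho = beta * (phi - 1)"
proof -
  define s where "s = sqrt (5::real)"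
  have s5: "s * s = 5" unfolding s_def by simp
  have s2: "s > 2" unfolding s_def by (simp add: real_less_rsqrt)
  have s3: "s < 3" unfolding s_def by (simp add: real_sqrt_less_iff real_less_lsqrt)
  have ph: "phi = (1 + s)/2" unfolding phi_def s_def by simp
  have be: "beta = (7 - s)/22" unfolding beta_def alpha_def R0_def s_def by simp
  show p2: "phi^2 = phi + 1" unfolding ph power2_eq_square using s5 by (simp add: algebra_simps)
  show b: "beta * (phi + 3) = 1" unfolding ph be using s5 by (simp add: algebra_simps)
  show "alpha = 2 * beta" unfolding beta_def by simp
  show p1: "phi > 1" unfolding ph using s2 by simp
  show "rho * phi = beta" unfolding rho_def using p1 by simp
  show bp: "beta > 0" unfolding be using s3 by simp
  show "rho > 0" unfolding rho_def using bp p1 by simp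
  show "alpha > 0" unfolding alpha_def R0_def using s3 s_def by simp
  show "R0 = alpha + 1" unfolding alpha_def by simp
  have "rho * phi = beta * (phi - 1) * phi" unfolding rho_def using p1 p2
    by (simp add: algebra_simps power2_eq_square)
  then show rr: "rho = beta * (phi - 1)" using p1 by simp
  then show "2 * alpha + rho = 1" using b unfolding beta_def by (simp add: algebra_simps)
qed

lemma core:
  fixes u v :: real
  assumes v0: "0 < v" and vu: "v \<le> u"
  shows "v \<le> alpha*u + max 0 (beta*min u (phi*v) - beta*(u-v)) + max 0 (beta*v - phi*beta*(u-v))
      + max 0 (rho*min u (phi*v) - phi*rho*(u-v))"
proof -
  note c = consts_facts
  have rp: "rho * phi = beta" by (rule c(4))
  show ?thesis
  proof (cases "u \<le> phi*v")
    case True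
    then have m: "min u (phi*v) = u" by simp
    have "alpha*u + (beta*u - beta*(u-v)) + (beta*v - phi*beta*(u-v)) + (rho*u - phi*rho*(u-v)) = v"
    proof -
      have r: "rho = beta * (phi - 1)" by (rule c(11))
      show ?thesis using c(1,2,3) r unfolding power2_eq_square by algebra
    qed
    then show ?thesis unfolding m by linarith
  next
    case False
    then have m: "min u (phi*v) = phi*v" by simp
    show ?thesis
    proof (cases "u \<le> 2*v")
      case True
      have "alpha*u + (beta*(phi*v) - beta*(u-v)) + (rho*(phi*v) - phi*rho*(u-v)) = v"
        using c(2,3) rp by algebra
      then show ?thesis unfolding m by linarith
    next
      case False
      have e: "alpha*u + (beta*(phi*v) - beta*(u-v)) = v + beta*(u - 2*v)"
        using c(2,3) by algebra
      have "beta*(u-2*v) \<ge> 0" using False c(6) by simp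
      then show ?thesis unfolding m using e by linarith
    qed
  qed
qed

lemma firstn_mem: "x \<in> firstn e a \<Longrightarrow> \<exists>i. i < nat \<lfloor>a\<rfloor> \<and> x = e i"
  unfolding firstn_def by auto

lemma firstn_mono: "a \<le> b \<Longrightarrow> firstn e a \<subseteq> firstn e b"
  unfolding firstn_def
  by (intro image_mono) (auto intro: order.strict_trans2 nat_mono floor_mono)

lemma firstn_range: "firstn e a \<subseteq> range e"
  unfolding firstn_def by auto

lemma finite_firstn: "finite (firstn e a)"
  unfolding firstn_def by auto

lemma card_firstn: "inj e \<Longrightarrow> card (firstn e a) = nat \<lfloor>a\<rfloor>"
  unfolding firstn_def by (simp add: card_image inj_on_subset)

lemma card_firstn_le: "0 \<le> a \<Longrightarrow> real (card (firstn e a)) \<le> a"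
proof -
  assume a: "0 \<le> a"
  have "card (firstn e a) \<le> nat \<lfloor>a\<rfloor>" unfolding firstn_def
    using card_image_le[of "{..<nat \<lfloor>a\<rfloor>}" e] by simp
  then have "real (card (firstn e a)) \<le> real (nat \<lfloor>a\<rfloor>)" by simp
  also have "\<dots> \<le> a" using a by simp
  finally show ?thesis .
qed

lemma card_firstn_ge: "inj e \<Longrightarrow> 0 \<le> a \<Longrightarrow> real (card (firstn e a)) \<ge> a - 1"
  using card_firstn[of e a] by (simp, linarith?)

lemma card_diff_ge:
  assumes "inj e" "0 \<le> b"
  shows "real (card (firstn e a - firstn e b)) \<ge> a - b - 1"
proof -
  have s: "{..<nat \<lfloor>a\<rfloor>} - {..<nat \<lfloor>b\<rfloor>} = {nat \<lfloor>b\<rfloor>..<nat \<lfloor>a\<rfloor>}" by auto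
  have "firstn e a - firstn e b = e ` ({..<nat \<lfloor>a\<rfloor>} - {..<nat \<lfloor>b\<rfloor>})"
    by (simp only: firstn_def image_set_diff[OF assms(1)])
  then have "card (firstn e a - firstn e b) = nat \<lfloor>a\<rfloor> - nat \<lfloor>b\<rfloor>"
    using assms(1) s by (simp add: card_image inj_on_subset)
  then show ?thesis using assms(2) by (simp, linarith?)
qed

lemma diff_disj:
  assumes "x \<in> firstn e a - firstn e b" "x \<in> firstn e c - firstn e d" "a \<le> d \<or> c \<le> b"
  shows False
proof -
  from assms(1) obtain i where i: "i < nat \<lfloor>a\<rfloor>" "x = e i" and nb: "x \<notin> firstn e b"
    using firstn_mem by blast
  from assms(2) obtain j where j: "j < nat \<lfloor>c\<rfloor>" "x = e j" and nd: "x \<notin> firstn e d"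
    using firstn_mem by blast
  from assms(3) show False
  proof
    assume "a \<le> d"
    then have "x \<in> firstn e d" using i firstn_mono[of a d e] unfolding firstn_def by auto
    then show False using nd by simp
  next
    assume "c \<le> b"
    then have "x \<in> firstn e b" using j firstn_mono[of c b e] unfolding firstn_def by auto
    then show False using nb by simp
  qed
qed

lemma F1gen:
  fixes p s1 s2 qq :: "nat \<Rightarrow> nat" and t k :: nat
  assumes ip: "inj p" and i1: "inj s1" and i2: "inj s2" and iq: "inj qq"
    and d1: "range p \<inter> range s1 = {}" and d2: "range p \<inter> range s2 = {}"
    and d3: "range p \<inter> range qq = {}" and d4: "range s1 \<inter> range s2 = {}"
    and d5: "range s1 \<inter> range qq = {}" and d6: "range s2 \<inter> range qq = {}"
    and k0: "0 < k" and kt: "k \<le> t"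
  shows "k \<le> card (firstn p (alpha*real t+4)
     \<union> (firstn s1 (beta*min (real t) (phi*real k)) - firstn s1 (beta*(real t - real k)))
     \<union> (firstn s2 (beta*real k) - firstn s2 (phi*beta*(real t - real k)))
     \<union> (firstn qq (rho*min (real t) (phi*real k)) - firstn qq (phi*rho*(real t - real k))))"
    (is "_ \<le> card (?X0 \<union> ?X1 \<union> ?X2 \<union> ?X3)")
proof -
  note c = consts_facts
  let ?T = "real t" and ?K = "real k"
  have f0: "finite ?X0" and f1: "finite ?X1" and f2: "finite ?X2" and f3: "finite ?X3"
    by (auto simp: finite_firstn)
  have r0: "?X0 \<subseteq> range p" and r1: "?X1 \<subseteq> range s1" and r2: "?X2 \<subseteq> range s2"
    and r3: "?X3 \<subseteq> range qq" using firstn_range by blast+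
  have "card (?X0 \<union> ?X1 \<union> ?X2 \<union> ?X3) = card ?X0 + card ?X1 + card ?X2 + card ?X3"
  proof -
    have "card (?X0 \<union> ?X1) = card ?X0 + card ?X1"
      using f0 f1 r0 r1 d1 by (intro card_Un_disjoint) blast+
    moreover have "card (?X0 \<union> ?X1 \<union> ?X2) = card (?X0 \<union> ?X1) + card ?X2"
      using f0 f1 f2 r0 r1 r2 d2 d4 by (intro card_Un_disjoint) blast+
    moreover have "card (?X0 \<union> ?X1 \<union> ?X2 \<union> ?X3) = card (?X0 \<union> ?X1 \<union> ?X2) + card ?X3"
      using f0 f1 f2 f3 r0 r1 r2 r3 d3 d5 d6 by (intro card_Un_disjoint) blast+
    ultimately show ?thesis by simp
  qed
  moreover have "real k \<le> real (card ?X0) + real (card ?X1) + real (card ?X2) + real (card ?X3)"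
  proof -
    have tk: "0 \<le> ?T - ?K" using kt by simp
    have "real (card ?X0) \<ge> alpha*?T + 4 - 1"
      using card_firstn_ge[OF ip, of "alpha*?T+4"] c(8) by simp
    moreover have "real (card ?X1) \<ge> max 0 (beta*min ?T (phi*?K) - beta*(?T-?K)) - 1"
      using card_diff_ge[OF i1, of "beta*(?T-?K)" "beta*min ?T (phi*?K)"] tk c(6) by simp
    moreover have "real (card ?X2) \<ge> max 0 (beta*?K - phi*beta*(?T-?K)) - 1"
      using card_diff_ge[OF i2, of "phi*beta*(?T-?K)" "beta*?K"] tk c(6) c(5) by simp
    moreover have "real (card ?X3) \<ge> max 0 (rho*min ?T (phi*?K) - phi*rho*(?T-?K)) - 1"
      using card_diff_ge[OF iq, of "phi*rho*(?T-?K)" "rho*min ?T (phi*?K)"] tk c(7) c(5) by simp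
    moreover have "?K \<le> alpha*?T + max 0 (beta*min ?T (phi*?K) - beta*(?T-?K))
        + max 0 (beta*?K - phi*beta*(?T-?K)) + max 0 (rho*min ?T (phi*?K) - phi*rho*(?T-?K))"
      using core[of ?K ?T] k0 kt by simp
    ultimately show ?thesis by linarith
  qed
  ultimately show ?thesis by linarith
qed

lemma firstn_rangeD: "x \<in> firstn e a \<Longrightarrow> x \<in> range e"
  unfolding firstn_def by auto

lemma combo:
  assumes "x \<in> a0 \<union> a1 \<union> a2 \<union> a3" "x \<in> b0 \<union> b1 \<union> b2 \<union> b3"
    "a0 \<subseteq> RPA" "a1 \<subseteq> RSA" "a2 \<subseteq> RSB" "a3 \<subseteq> RQ"
    "b0 \<subseteq> RPB" "b1 \<subseteq> RSB" "b2 \<subseteq> RSA" "b3 \<subseteq> RQ"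
    "RPA \<inter> RPB = {}" "RPA \<inter> RSA = {}" "RPA \<inter> RSB = {}" "RPA \<inter> RQ = {}"
    "RPB \<inter> RSA = {}" "RPB \<inter> RSB = {}" "RPB \<inter> RQ = {}" "RSA \<inter> RSB = {}"
    "RSA \<inter> RQ = {}" "RSB \<inter> RQ = {}"
    "x \<in> a1 \<Longrightarrow> x \<in> b2 \<Longrightarrow> False"
    "x \<in> a2 \<Longrightarrow> x \<in> b1 \<Longrightarrow> False"
    "x \<in> a3 \<Longrightarrow> x \<in> b3 \<Longrightarrow> False"
  shows False
  using assms by blast

lemma F2:
  fixes P S :: "color \<Rightarrow> nat \<Rightarrow> nat" and q :: "nat \<Rightarrow> nat"
  assumes E: "enums_ok P S q" and k0: "0 < k" "k \<le> t" "0 < k'" "k' \<le> t'" and kk: "k + k' \<le> max t t'"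
  shows "Fcons P S q A t k \<inter> Fcons P S q B t' k' = {}"
proof -
  note c = consts_facts
  let ?T = "real t" and ?K = "real k" and ?T' = "real t'" and ?K' = "real k'"
  have mK: "min ?T (phi*?K) \<le> phi*?K" and mK': "min ?T' (phi*?K') \<le> phi*?K'" by simp_all
  have I: "(beta*min ?T (phi*?K) \<le> phi*beta*(?T'-?K') \<or> beta*?K' \<le> beta*(?T-?K)) \<and>
     (beta*?K \<le> beta*(?T'-?K') \<or> beta*min ?T' (phi*?K') \<le> phi*beta*(?T-?K)) \<and>
     (rho*min ?T (phi*?K) \<le> phi*rho*(?T'-?K') \<or> rho*min ?T' (phi*?K') \<le> phi*rho*(?T-?K))"
  proof (cases "t \<le> t'")
    case True
    then have h: "?K \<le> ?T' - ?K'" using kk by simp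
    have a1: "phi*?K \<le> phi*(?T'-?K')" using mult_left_mono[OF h, of phi] c(5) by linarith
    have "beta*min ?T (phi*?K) \<le> beta*(phi*(?T'-?K'))"
      using mult_left_mono[OF order.trans[OF mK a1], of beta] c(6) by linarith
    moreover have "rho*min ?T (phi*?K) \<le> rho*(phi*(?T'-?K'))"
      using mult_left_mono[OF order.trans[OF mK a1], of rho] c(7) by linarith
    moreover have "beta*?K \<le> beta*(?T'-?K')" using mult_left_mono[OF h, of beta] c(6) by linarith
    moreover have "phi*beta*x = beta*(phi*x)" "phi*rho*x = rho*(phi*x)" for x :: real by simp_all
    ultimately show ?thesis by presburger
  next
    case False
    then have h: "?K' \<le> ?T - ?K" using kk by simp
    have a1: "phi*?K' \<le> phi*(?T-?K)" using mult_left_mono[OF h, of phi] c(5) by linarith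
    have "beta*min ?T' (phi*?K') \<le> beta*(phi*(?T-?K))"
      using mult_left_mono[OF order.trans[OF mK' a1], of beta] c(6) by linarith
    moreover have "rho*min ?T' (phi*?K') \<le> rho*(phi*(?T-?K))"
      using mult_left_mono[OF order.trans[OF mK' a1], of rho] c(7) by linarith
    moreover have "beta*?K' \<le> beta*(?T-?K)" using mult_left_mono[OF h, of beta] c(6) by linarith
    moreover have "phi*beta*x = beta*(phi*x)" "phi*rho*x = rho*(phi*x)" for x :: real by simp_all
    ultimately show ?thesis by presburger
  qed
  show ?thesis
  proof (rule ccontr)
    assume "Fcons P S q A t k \<inter> Fcons P S q B t' k' \<noteq> {}"
    then obtain x where xA: "x \<in> Fcons P S q A t k" and xB: "x \<in> Fcons P S q B t' k'" by blast
    have D1: False if "x \<in> firstn (S A) (beta*min ?T (phi*?K)) - firstn (S A) (beta*(?T-?K))"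
       "x \<in> firstn (S A) (beta*?K') - firstn (S A) (phi*beta*(?T'-?K'))"
      using diff_disj[OF that] I by blast
    have D2: False if "x \<in> firstn (S B) (beta*?K) - firstn (S B) (phi*beta*(?T-?K))"
       "x \<in> firstn (S B) (beta*min ?T' (phi*?K')) - firstn (S B) (beta*(?T'-?K'))"
      using diff_disj[OF that] I by blast
    have D3: False if "x \<in> firstn q (rho*min ?T (phi*?K)) - firstn q (phi*rho*(?T-?K))"
       "x \<in> firstn q (rho*min ?T' (phi*?K')) - firstn q (phi*rho*(?T'-?K'))"
      using diff_disj[OF that] I by blast
    have diffr: "firstn e a - firstn e b \<subseteq> range e" for e :: "nat \<Rightarrow> nat" and a b
      using firstn_range by blast
    show False
      apply (rule combo[OF xA[unfolded Fcons_def] xB[unfolded Fcons_def],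
          where RPA="range (P A)" and RPB="range (P B)" and RSA="range (S A)"
            and RSB="range (S B)" and RQ="range q"])
      using E unfolding enums_ok_def
      apply (simp_all only: other.simps firstn_range diffr)
      using D1 D2 D3 by blast+
  qed
qed

lemma Fcons_sub:
  fixes P S :: "color \<Rightarrow> nat \<Rightarrow> nat" and q :: "nat \<Rightarrow> nat"
  assumes "1 \<le> \<kappa>" "\<kappa> \<le> \<tau>" "\<tau> \<le> t"
  shows "Fcons P S q c \<tau> \<kappa> \<subseteq> firstn (P c) (alpha*real t + 4) \<union> firstn (S c) (beta*real t)
     \<union> firstn (S (other c)) (beta*real t) \<union> firstn q (rho*real t)"
proof -
  note cf = consts_facts
  have tt: "real \<tau> \<le> real t" and kt: "real \<kappa> \<le> real t" using assms by simp_all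
  have mn: "min (real \<tau>) (phi*real \<kappa>) \<le> real t" using tt by linarith
  have "alpha*real \<tau> + 4 \<le> alpha*real t + 4" using mult_left_mono[OF tt, of alpha] cf(8) by linarith
  then have m0: "firstn (P c) (alpha*real \<tau> + 4) \<subseteq> firstn (P c) (alpha*real t + 4)" by (rule firstn_mono)
  have "beta*min (real \<tau>) (phi*real \<kappa>) \<le> beta*real t" using mult_left_mono[OF mn, of beta] cf(6) by linarith
  then have m1: "firstn (S c) (beta*min (real \<tau>) (phi*real \<kappa>)) \<subseteq> firstn (S c) (beta*real t)" by (rule firstn_mono)
  have "beta*real \<kappa> \<le> beta*real t" using mult_left_mono[OF kt, of beta] cf(6) by linarith
  then have m2: "firstn (S (other c)) (beta*real \<kappa>) \<subseteq> firstn (S (other c)) (beta*real t)" by (rule firstn_mono)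
  have "rho*min (real \<tau>) (phi*real \<kappa>) \<le> rho*real t" using mult_left_mono[OF mn, of rho] cf(7) by linarith
  then have m3: "firstn q (rho*min (real \<tau>) (phi*real \<kappa>)) \<subseteq> firstn q (rho*real t)" by (rule firstn_mono)
  show ?thesis unfolding Fcons_def using m0 m1 m2 m3 by blast
qed

lemma union_bound:
  fixes P S :: "color \<Rightarrow> nat \<Rightarrow> nat" and q :: "nat \<Rightarrow> nat"
  shows "finite (F_union (Fcons P S q) t) \<and> real (card (F_union (Fcons P S q) t)) \<le> R0 * real t + 8"
proof -
  note cf = consts_facts
  let ?U = "firstn (P A) (alpha*real t + 4) \<union> firstn (P B) (alpha*real t + 4) \<union> firstn (S A) (beta*real t)
     \<union> firstn (S B) (beta*real t) \<union> firstn q (rho*real t)"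
  have sub: "F_union (Fcons P S q) t \<subseteq> ?U"
  proof
    fix x assume "x \<in> F_union (Fcons P S q) t"
    then obtain c \<tau> \<kappa> where h: "1 \<le> \<kappa>" "\<kappa> \<le> \<tau>" "\<tau> \<le> t" and x: "x \<in> Fcons P S q c \<tau> \<kappa>"
      unfolding F_union_def by auto
    show "x \<in> ?U" using Fcons_sub[OF h, of P S q c] x by (cases c) auto
  qed
  have fU: "finite ?U" by (simp add: finite_firstn)
  have "card ?U \<le> card (firstn (P A) (alpha*real t + 4)) + card (firstn (P B) (alpha*real t + 4))
     + card (firstn (S A) (beta*real t)) + card (firstn (S B) (beta*real t)) + card (firstn q (rho*real t))"
    by (rule order.trans[OF card_Un_le] add_mono card_Un_le order.refl)+
  then have "real (card ?U) \<le> real (card (firstn (P A) (alpha*real t + 4))) + real (card (firstn (P B) (alpha*real t + 4)))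
     + real (card (firstn (S A) (beta*real t))) + real (card (firstn (S B) (beta*real t))) + real (card (firstn q (rho*real t)))"
    by linarith
  also have "\<dots> \<le> (alpha*real t + 4) + (alpha*real t + 4) + beta*real t + beta*real t + rho*real t"
    using card_firstn_le cf(6,7,8) by (intro add_mono) auto
  also have "\<dots> = R0 * real t + 8"
    using cf(3,9,10) by algebra
  finally have "real (card ?U) \<le> R0 * real t + 8" .
  moreover have "card (F_union (Fcons P S q) t) \<le> card ?U" using card_mono[OF fU sub] .
  ultimately show ?thesis using finite_subset[OF sub fU] by linarith
qed

theorem mainTheorem4:
  fixes P S :: "color \<Rightarrow> nat \<Rightarrow> nat" and q :: "nat \<Rightarrow> nat"
  assumes "enums_ok P S q"
  shows "F_system (Fcons P S q)
    \<and> (\<forall>t::nat. 0 < t \<longrightarrow> finite (F_union (Fcons P S q) t)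
          \<and> real (card (F_union (Fcons P S q) t)) \<le> R0 * real t + 8)
    \<and> competitive R0 (Fcons P S q)"
proof -
  have E: "inj (P A)" "inj (P B)" "inj (S A)" "inj (S B)" "inj q"
     "range (P A) \<inter> range (P B) = {}" "range (P A) \<inter> range (S A) = {}"
     "range (P A) \<inter> range (S B) = {}" "range (P A) \<inter> range q = {}"
     "range (P B) \<inter> range (S A) = {}" "range (P B) \<inter> range (S B) = {}"
     "range (P B) \<inter> range q = {}" "range (S A) \<inter> range (S B) = {}"
     "range (S A) \<inter> range q = {}" "range (S B) \<inter> range q = {}"
    using assms unfolding enums_ok_def by auto
  have F1: "k \<le> card (Fcons P S q c t k)" if "0 < k" "k \<le> t" for c t k
  proof (cases c)
    case A
    show ?thesis unfolding A Fcons_def other.simps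
      by (rule F1gen[OF E(1) E(3) E(4) E(5) E(7) E(8) E(9) E(13) E(14) E(15) that])
  next
    case B
    have d: "range (S B) \<inter> range (S A) = {}" using E(13) by blast
    show ?thesis unfolding B Fcons_def other.simps
      by (rule F1gen[OF E(2) E(4) E(3) E(5) E(11) E(10) E(12) d E(15) E(14) that])
  qed
  have FS: "F_system (Fcons P S q)"
    unfolding F_system_def using F1 F2[OF assms] by blast
  have UB: "\<forall>t::nat. 0 < t \<longrightarrow> finite (F_union (Fcons P S q) t)
          \<and> real (card (F_union (Fcons P S q) t)) \<le> R0 * real t + 8"
    using union_bound by blast
  have "competitive R0 (Fcons P S q)" unfolding competitive_def using FS UB by blast
  then show ?thesis using FS UB by blast
qed

end
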